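(* Let $(A,\mathfrak m)$ be a local integral domain which is not a valuation domain, let $E := A/\mathfrak m$, and let $B := A \ltimes E$ be the trivial ring extension of $A$ by $E$. Let $f : A \to B$ be the ring homomorphism $f(a) = (a,0)$ and let $J := 0 \ltimes E$, a proper ideal of $B$. Then: (1) $J \not\subseteq f(A)$; (2) $f(\mathrm{Reg}(A)) \neq \mathrm{Reg}(B)$; (3) $A$ is not a Prüfer ring; (4) $A \bowtie^f J$ is a Prüfer ring.
   Context: All rings are commutative with identity. For an $A$-module $E$, the trivial ring extension $A\ltimes E$ is the ring $A\times E$ with multiplication $(a,e)(a',e')=(aa',ae'+a'e)$. For a ring homomorphism $f:A\to B$ and an ideal $J$ of $B$, $A \bowtie^f J := \{(a, f(a)+j) : a \in A, j \in J\}$, a subring of $A\times B$. $\mathrm{Reg}(R)$ is the set of regular elements (non-zero-divisors) of $R$. An ideal is regular if it contains a regular element. A ring $R$ is a Prüfer ring if every finitely generated regular ideal of $R$ is invertible. *)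

theory Defs
  imports "HOL-Algebra.Algebra"
begin

definition Reg :: "('a, 'c) ring_scheme \<Rightarrow> 'a set" where
  "Reg R = {x \<in> carrier R. \<forall>y \<in> carrier R. x \<otimes>\<^bsub>R\<^esub> y = \<zero>\<^bsub>R\<^esub> \<longrightarrow> y = \<zero>\<^bsub>R\<^esub>}"

definition regular_ideal :: "('a, 'c) ring_scheme \<Rightarrow> 'a set \<Rightarrow> bool" where
  "regular_ideal R I \<longleftrightarrow> ideal I R \<and> I \<inter> Reg R \<noteq> {}"

definition fin_gen_ideal :: "('a, 'c) ring_scheme \<Rightarrow> 'a set \<Rightarrow> bool" where
  "fin_gen_ideal R I \<longleftrightarrow> (\<exists>S. finite S \<and> S \<subseteq> carrier R \<and> I = Idl\<^bsub>R\<^esub> S)"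

(* An element a/s (s regular) of the total ring of fractions Q(R) lies in
   I^{-1} = {x \<in> Q(R). x I \<subseteq> R} iff for every i in I, a*i/s \<in> R, i.e. a*i = s*r for some r. *)
definition in_inverse :: "('a, 'c) ring_scheme \<Rightarrow> 'a set \<Rightarrow> 'a \<Rightarrow> 'a \<Rightarrow> bool" where
  "in_inverse R I a s \<longleftrightarrow> a \<in> carrier R \<and> s \<in> Reg R \<and>
     (\<forall>i \<in> I. \<exists>r \<in> carrier R. a \<otimes>\<^bsub>R\<^esub> i = s \<otimes>\<^bsub>R\<^esub> r)"

(* I is invertible: I * I^{-1} = R (inside Q(R)).  Since I*I^{-1} \<subseteq> R is an ideal, this
   means 1 = \<Sum>_k i_k * (a_k/s_k) in Q(R) with i_k \<in> I and a_k/s_k \<in> I^{-1};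
   equality of fractions with regular denominators is written out by clearing
   the common denominator \<Prod>_k s_k. *)
definition invertible_ideal :: "('a, 'c) ring_scheme \<Rightarrow> 'a set \<Rightarrow> bool" where
  "invertible_ideal R I \<longleftrightarrow> ideal I R \<and>
     (\<exists>(n::nat) i a s. (\<forall>k<n. i k \<in> I \<and> in_inverse R I (a k) (s k)) \<and>
        (\<Oplus>\<^bsub>R\<^esub> k\<in>{..<n}. i k \<otimes>\<^bsub>R\<^esub> a k \<otimes>\<^bsub>R\<^esub> (\<Otimes>\<^bsub>R\<^esub> j\<in>{..<n} - {k}. s j))
          = (\<Otimes>\<^bsub>R\<^esub> j\<in>{..<n}. s j))"

definition prufer :: "('a, 'c) ring_scheme \<Rightarrow> bool" where
  "prufer R \<longleftrightarrow> (\<forall>I. fin_gen_ideal R I \<and> regular_ideal R I \<longrightarrow> invertible_ideal R I)"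

(* Valuation domain: for x = a/b in the fraction field, x \<in> R or x^{-1} \<in> R *)
definition valuation_domain :: "('a, 'c) ring_scheme \<Rightarrow> bool" where
  "valuation_domain R \<longleftrightarrow> domain R \<and>
     (\<forall>a \<in> carrier R. \<forall>b \<in> carrier R. b \<noteq> \<zero>\<^bsub>R\<^esub> \<longrightarrow> a \<noteq> \<zero>\<^bsub>R\<^esub> \<longrightarrow>
        (\<exists>c \<in> carrier R. a = b \<otimes>\<^bsub>R\<^esub> c) \<or> (\<exists>c \<in> carrier R. b = a \<otimes>\<^bsub>R\<^esub> c))"

definition local_ring :: "('a, 'c) ring_scheme \<Rightarrow> 'a set \<Rightarrow> bool" where
  "local_ring R m \<longleftrightarrow> maximalideal m R \<and> (\<forall>n. maximalideal n R \<longrightarrow> n = m)"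

definition quot_module :: "('a, 'c) ring_scheme \<Rightarrow> 'a set \<Rightarrow> ('a, 'a set) module" where
  "quot_module R I = \<lparr>carrier = carrier (R Quot I), monoid.mult = monoid.mult (R Quot I), one = one (R Quot I),
     ring.zero = ring.zero (R Quot I), ring.add = ring.add (R Quot I),
     module.smult = (\<lambda>a Y. monoid.mult (R Quot I) (a_r_coset R I a) Y)\<rparr>"

definition triv_ext :: "('a, 'c) ring_scheme \<Rightarrow> ('a, 'b, 'd) module_scheme \<Rightarrow> ('a \<times> 'b) ring" where
  "triv_ext R M = \<lparr>carrier = carrier R \<times> carrier M,
     monoid.mult = (\<lambda>(a, e) (a', e'). (a \<otimes>\<^bsub>R\<^esub> a', (a \<odot>\<^bsub>M\<^esub> e') \<oplus>\<^bsub>M\<^esub> (a' \<odot>\<^bsub>M\<^esub> e))),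
     one = (\<one>\<^bsub>R\<^esub>, \<zero>\<^bsub>M\<^esub>),
     ring.zero = (\<zero>\<^bsub>R\<^esub>, \<zero>\<^bsub>M\<^esub>),
     ring.add = (\<lambda>(a, e) (a', e'). (a \<oplus>\<^bsub>R\<^esub> a', e \<oplus>\<^bsub>M\<^esub> e'))\<rparr>"

definition amalg :: "('a, 'c) ring_scheme \<Rightarrow> ('b, 'd) ring_scheme \<Rightarrow> ('a \<Rightarrow> 'b) \<Rightarrow> 'b set \<Rightarrow> ('a \<times> 'b) ring" where
  "amalg R S f J = \<lparr>carrier = {(a, f a \<oplus>\<^bsub>S\<^esub> j) | a j. a \<in> carrier R \<and> j \<in> J},
     monoid.mult = (\<lambda>(a, b) (a', b'). (a \<otimes>\<^bsub>R\<^esub> a', b \<otimes>\<^bsub>S\<^esub> b')),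
     one = (\<one>\<^bsub>R\<^esub>, \<one>\<^bsub>S\<^esub>),
     ring.zero = (\<zero>\<^bsub>R\<^esub>, \<zero>\<^bsub>S\<^esub>),
     ring.add = (\<lambda>(a, b) (a', b'). (a \<oplus>\<^bsub>R\<^esub> a', b \<oplus>\<^bsub>S\<^esub> b'))\<rparr>"

end

theory Submission
  imports Defs
begin


lemma (in cring) local_unit:
  assumes loc: "local_ring R m" and x: "x \<in> carrier R" and xm: "x \<notin> m"
  shows "x \<in> Units R"
proof (rule ccontr)
  assume nu: "x \<notin> Units R"
  define AA where "AA = {I. ideal I R \<and> x \<in> I \<and> \<one> \<notin> I}"
  have P: "PIdl x \<in> AA"
  proof -
    have "\<one> \<notin> PIdl x"
    proof
      assume "\<one> \<in> PIdl x"
      then obtain y where y: "y \<in> carrier R" "\<one> = y \<otimes> x" unfolding cgenideal_def by blast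
      then have "x \<otimes> y = \<one>" using x m_comm by auto
      then show False using nu y x unfolding Units_def by auto
    qed
    then show ?thesis unfolding AA_def using cgenideal_ideal[OF x] cgenideal_self[OF x] by auto
  qed
  have "\<exists>N\<in>AA. \<forall>Y\<in>AA. N \<subseteq> Y \<longrightarrow> Y = N"
  proof (rule subset_Zorn_nonempty)
    show "AA \<noteq> {}" using P by auto
  next
    fix C assume C: "C \<noteq> {}" "subset.chain AA C"
    have ch: "subset.chain {I. ideal I R} C" using C(2) unfolding pred_on.chain_def AA_def by auto
    have "ideal (\<Union>C) R" using chain_Union_is_ideal[OF ch] C(1) by simp
    moreover have "x \<in> \<Union>C" using C unfolding pred_on.chain_def AA_def by auto
    moreover have "\<one> \<notin> \<Union>C" using C unfolding pred_on.chain_def AA_def by auto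
    ultimately show "\<Union>C \<in> AA" unfolding AA_def by auto
  qed
  then obtain M where M: "M \<in> AA" "\<And>Y. Y \<in> AA \<Longrightarrow> M \<subseteq> Y \<Longrightarrow> Y = M" by blast
  have "maximalideal M R"
  proof (rule maximalidealI)
    show "ideal M R" using M(1) AA_def by auto
    show "carrier R \<noteq> M" using M(1) AA_def by auto
    fix J assume J: "ideal J R" "M \<subseteq> J" "J \<subseteq> carrier R"
    show "J = M \<or> J = carrier R"
    proof (cases "\<one> \<in> J")
      case True then show ?thesis using ideal.one_imp_carrier[OF J(1)] by auto
    next
      case False then have "J \<in> AA" using J M(1) unfolding AA_def by auto
      then show ?thesis using M(2) J(2) by auto
    qed
  qed
  then have "M = m" using loc unfolding local_ring_def by auto
  then show False using M(1) xm unfolding AA_def by auto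
qed

lemma (in ring) ideal_finsum_closed:
  assumes I: "ideal I R" and F: "finite F"
  shows "g \<in> F \<rightarrow> I \<Longrightarrow> finsum R g F \<in> I"
  using F
proof (induction F rule: finite_induct)
  case empty
  then show ?case using I by (simp add: additive_subgroup.zero_closed ideal.axioms(1))
next
  case (insert a F)
  have gc: "g \<in> insert a F \<rightarrow> carrier R" using insert(4) ideal.Icarr[OF I] by blast
  have "finsum R g (insert a F) = g a \<oplus> finsum R g F"
    by (rule finsum_insert) (use insert gc in auto)
  moreover have "finsum R g F \<in> I" using insert by auto
  moreover have "g a \<in> I" using insert by auto
  ultimately show ?case using I by (simp add: additive_subgroup.a_closed ideal.axioms(1))
qed

lemma (in domain) finprod_nonzero:
  assumes F: "finite F"
  shows "s \<in> F \<rightarrow> carrier R \<Longrightarrow> (\<forall>j\<in>F. s j \<noteq> \<zero>) \<Longrightarrow> finprod R s F \<noteq> \<zero>"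
  using F
proof (induction F rule: finite_induct)
  case empty then show ?case by simp
next
  case (insert a F)
  have "finprod R s (insert a F) = s a \<otimes> finprod R s F"
    by (rule finprod_insert) (use insert in auto)
  moreover have "finprod R s F \<in> carrier R" using insert by (intro finprod_closed) auto
  moreover have "s a \<in> carrier R" "s a \<noteq> \<zero>" "finprod R s F \<noteq> \<zero>" using insert by auto
  ultimately show ?case using integral by metis
qed

lemma (in domain) not_prufer:
  assumes loc: "local_ring R m" and nv: "\<not> valuation_domain R"
  shows "\<not> prufer R"
proof
  assume pr: "prufer R"
  interpret M: maximalideal m R using loc local_ring_def by auto
  have one_m: "\<one> \<notin> m" using M.one_imp_carrier M.I_notcarr by auto
  have unit: "\<And>x. x\<in>carrier R \<Longrightarrow> x \<notin> m \<Longrightarrow> x \<in> Units R" using local_unit[OF loc] by auto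
  have summ: "\<And>x y. x \<in> m \<Longrightarrow> y \<in> m \<Longrightarrow> x \<oplus> y \<in> m" by (simp add: M.a_closed)
  from nv obtain a b where ab: "a \<in> carrier R" "b \<in> carrier R" "a \<noteq> \<zero>" "b \<noteq> \<zero>"
     "\<not>(\<exists>c\<in>carrier R. a = b \<otimes> c)" "\<not>(\<exists>c\<in>carrier R. b = a \<otimes> c)"
    unfolding valuation_domain_def using domain_axioms by blast
  define I where "I = Idl {a,b}"
  have Iid: "ideal I R" unfolding I_def using genideal_ideal ab by auto
  have Icarr: "\<And>x. x \<in> I \<Longrightarrow> x \<in> carrier R" using ideal.Icarr[OF Iid] by auto
  have fg: "fin_gen_ideal R I" unfolding fin_gen_ideal_def I_def using ab by (intro exI[of _ "{a,b}"]) auto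
  have aI: "a \<in> I" "b \<in> I" unfolding I_def using genideal_self[of "{a,b}"] ab by auto
  have aReg: "a \<in> Reg R" unfolding Reg_def using ab integral by auto
  have "regular_ideal R I" unfolding regular_ideal_def using Iid aI aReg by auto
  then have "invertible_ideal R I" using pr fg unfolding prufer_def by auto
  then obtain n :: nat and i \<alpha> s where H: "\<forall>k<n. i k \<in> I \<and> in_inverse R I (\<alpha> k) (s k)"
    and E: "(\<Oplus>k\<in>{..<n}. i k \<otimes> \<alpha> k \<otimes> (\<Otimes>j\<in>{..<n} - {k}. s j)) = (\<Otimes>j\<in>{..<n}. s j)"
    unfolding invertible_ideal_def by (elim conjE exE) (rule that, assumption+)
  have sReg: "\<And>k. k < n \<Longrightarrow> s k \<in> carrier R \<and> s k \<noteq> \<zero>"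
  proof -
    fix k assume "k < n"
    then have "s k \<in> Reg R" using H unfolding in_inverse_def by auto
    then have "s k \<in> carrier R" "\<And>y. y \<in> carrier R \<Longrightarrow> s k \<otimes> y = \<zero> \<Longrightarrow> y = \<zero>" unfolding Reg_def by auto
    moreover have "s k \<noteq> \<zero>"
    proof
      assume "s k = \<zero>"
      then have "s k \<otimes> \<one> = \<zero>" by simp
      then show False using calculation(2)[of "\<one>"] by simp
    qed
    ultimately show "s k \<in> carrier R \<and> s k \<noteq> \<zero>" by simp
  qed
  have ac: "\<And>k. k < n \<Longrightarrow> \<alpha> k \<in> carrier R \<and> i k \<in> carrier R" using H Icarr unfolding in_inverse_def by auto
  have "\<forall>k<n. \<exists>r. r \<in> carrier R \<and> \<alpha> k \<otimes> i k = s k \<otimes> r"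
    using H unfolding in_inverse_def by blast
  then obtain r where r: "\<And>k. k<n \<Longrightarrow> r k \<in> carrier R \<and> \<alpha> k \<otimes> i k = s k \<otimes> r k" by metis
  define P where "P = finprod R s {..<n}"
  have sc: "s \<in> {..<n} \<rightarrow> carrier R" using sReg by auto
  have Pc: "P \<in> carrier R" unfolding P_def using sc by (intro finprod_closed) auto
  have P0: "P \<noteq> \<zero>" unfolding P_def using finprod_nonzero[of "{..<n}" s] sc sReg by auto
  have Pk: "s k \<otimes> finprod R s ({..<n}-{k}) = P" if k: "k<n" for k
  proof -
    have "{..<n} = insert k ({..<n}-{k})" using k by auto
    then have "P = finprod R s (insert k ({..<n}-{k}))" unfolding P_def by simp
    also have "\<dots> = s k \<otimes> finprod R s ({..<n}-{k})"
      by (rule finprod_insert) (use sc k in auto)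
    finally show ?thesis by simp
  qed
  have trm: "i k \<otimes> \<alpha> k \<otimes> finprod R s ({..<n}-{k}) = r k \<otimes> P" if k: "k<n" for k
  proof -
    have Qc: "finprod R s ({..<n}-{k}) \<in> carrier R" using sc by (intro finprod_closed) auto
    have "i k \<otimes> \<alpha> k \<otimes> finprod R s ({..<n}-{k}) = (\<alpha> k \<otimes> i k) \<otimes> finprod R s ({..<n}-{k})"
      using ac[OF k] m_comm by simp
    also have "\<dots> = (s k \<otimes> r k) \<otimes> finprod R s ({..<n}-{k})" using r[OF k] by simp
    also have "\<dots> = r k \<otimes> (s k \<otimes> finprod R s ({..<n}-{k}))"
      using r[OF k] sReg[OF k] Qc by (simp add: m_assoc m_lcomm)
    finally show ?thesis using Pk[OF k] by simp
  qed
  have rc: "r \<in> {..<n} \<rightarrow> carrier R" using r by auto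
  have "(\<Oplus>k\<in>{..<n}. i k \<otimes> \<alpha> k \<otimes> (\<Otimes>j\<in>{..<n} - {k}. s j)) = (\<Oplus>k\<in>{..<n}. r k \<otimes> P)"
    by (rule finsum_cong') (use trm r Pc in auto)
  with E[symmetric] have "P = (\<Oplus>k\<in>{..<n}. r k \<otimes> P)" unfolding P_def by (rule trans)
  also have "\<dots> = finsum R r {..<n} \<otimes> P" using finsum_ldistr[of "{..<n}" P r] rc Pc by simp
  finally have "\<one> \<otimes> P = finsum R r {..<n} \<otimes> P" using Pc by simp
  then have sum1: "finsum R r {..<n} = \<one>" using m_rcancel[OF P0 Pc] rc by (simp add: finsum_closed)
  have "\<exists>k<n. r k \<notin> m"
  proof (rule ccontr)
    assume "\<not> ?thesis"
    then have "r \<in> {..<n} \<rightarrow> m" by auto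
    then have "finsum R r {..<n} \<in> m" using ideal_finsum_closed[OF M.is_ideal] by auto
    then show False using sum1 one_m by simp
  qed
  then obtain k where k: "k < n" "r k \<notin> m" by blast
  define u where "u = r k"
  define ik where "ik = i k"
  have u: "u \<in> Units R" "u \<in> carrier R" using unit k r u_def by auto
  have ikc: "ik \<in> carrier R" "ik \<in> I" using ac k H ik_def by auto
  have div: "\<exists>c\<in>carrier R. x = ik \<otimes> c" if x: "x \<in> I" for x
  proof -
    obtain r' where r': "r' \<in> carrier R" "\<alpha> k \<otimes> x = s k \<otimes> r'"
      using H k x unfolding in_inverse_def by blast
    have xc: "x \<in> carrier R" using Icarr x by auto
    note cs = xc r'(1) ikc(1) u(2) ac[OF k(1)] sReg[OF k(1)]
    have "s k \<otimes> (u \<otimes> x) = (s k \<otimes> u) \<otimes> x" using cs m_assoc by simp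
    also have "\<dots> = (\<alpha> k \<otimes> ik) \<otimes> x" using r[OF k(1)] u_def ik_def by simp
    also have "\<dots> = ik \<otimes> (\<alpha> k \<otimes> x)" using cs by (simp add: m_assoc m_lcomm m_comm)
    also have "\<dots> = s k \<otimes> (ik \<otimes> r')" using r' cs by (simp add: m_lcomm)
    finally have "u \<otimes> x = ik \<otimes> r'" using m_lcancel[of "s k" "u \<otimes> x" "ik \<otimes> r'"] cs by simp
    then have "inv u \<otimes> (u \<otimes> x) = inv u \<otimes> (ik \<otimes> r')" by simp
    moreover have "inv u \<otimes> (u \<otimes> x) = x" using cs u by (simp add: m_assoc[symmetric])
    moreover have "inv u \<otimes> (ik \<otimes> r') = ik \<otimes> (inv u \<otimes> r')" using cs u by (simp add: m_lcomm)
    ultimately have "x = ik \<otimes> (inv u \<otimes> r')" by simp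
    then show ?thesis using u r' by auto
  qed
  obtain c where c: "c \<in> carrier R" "a = ik \<otimes> c" using div aI by blast
  obtain d where d: "d \<in> carrier R" "b = ik \<otimes> d" using div aI by blast
  have "I \<subseteq> PIdl a <+> PIdl b"
    unfolding I_def
  proof (rule genideal_minimal)
    show "ideal (PIdl a <+> PIdl b) R" by (rule add_ideals) (use cgenideal_ideal ab in auto)
    have a1: "a = \<one> \<otimes> a \<oplus> \<zero> \<otimes> b" "b = \<zero> \<otimes> a \<oplus> \<one> \<otimes> b" using ab by simp_all
    have "\<And>x y. x \<in> carrier R \<Longrightarrow> y \<in> carrier R \<Longrightarrow> x \<otimes> a \<oplus> y \<otimes> b \<in> PIdl a <+> PIdl b"
      unfolding set_add_def' cgenideal_def by blast
    then show "{a, b} \<subseteq> PIdl a <+> PIdl b" using a1 by (metis empty_subsetI insert_subset one_closed zero_closed)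
  qed

  then have "ik \<in> PIdl a <+> PIdl b" using ikc by auto
  then obtain p q where pq: "p \<in> carrier R" "q \<in> carrier R" "ik = p \<otimes> a \<oplus> q \<otimes> b"
    unfolding set_add_def' cgenideal_def by blast
  have ik0: "ik \<noteq> \<zero>"
  proof
    assume "ik = \<zero>"
    then have "a = \<zero>" using c by simp
    then show False using ab by simp
  qed
  have "ik \<otimes> \<one> = ik \<otimes> (p \<otimes> c \<oplus> q \<otimes> d)"
  proof -
    have "ik \<otimes> (p \<otimes> c \<oplus> q \<otimes> d) = p \<otimes> (ik \<otimes> c) \<oplus> q \<otimes> (ik \<otimes> d)"
      using pq c d ikc by (simp add: r_distr m_lcomm)
    also have "\<dots> = p \<otimes> a \<oplus> q \<otimes> b" by (simp only: c(2)[symmetric] d(2)[symmetric])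
    also have "\<dots> = ik" by (rule pq(3)[symmetric])
    finally show ?thesis using ikc by simp
  qed
  then have one: "p \<otimes> c \<oplus> q \<otimes> d = \<one>" using m_lcancel[OF ik0 ikc(1) one_closed, of "p \<otimes> c \<oplus> q \<otimes> d"] pq(1,2) c(1) d(1) by simp
  show False
  proof (cases "p \<otimes> c \<in> m")
    case True
    have "q \<otimes> d \<notin> m"
    proof
      assume "q \<otimes> d \<in> m"
      then have "p \<otimes> c \<oplus> q \<otimes> d \<in> m" using True summ by blast
      then show False using one one_m by simp
    qed
    then have "q \<otimes> d \<in> Units R" using unit pq(1,2) d(1) by auto
    then have "d \<otimes> q \<in> Units R" using pq(2) d(1) m_comm by metis
    then have du: "d \<in> Units R" using unit_factor[of d q] pq(2) d(1) by blast
    have "ik = b \<otimes> inv d" using d du by (simp add: m_assoc ikc)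
    then have "a = b \<otimes> (inv d \<otimes> c)" using c du ab by (simp add: m_assoc)
    moreover have "inv d \<otimes> c \<in> carrier R" using du c(1) by simp
    ultimately show False using ab(5) by blast
  next
    case False
    then have "p \<otimes> c \<in> Units R" using unit pq(1,2) c(1) by auto
    then have "c \<otimes> p \<in> Units R" using pq(1) c(1) m_comm by metis
    then have cu: "c \<in> Units R" using unit_factor[of c p] pq(1) c(1) by blast
    have "ik = a \<otimes> inv c" using c cu by (simp add: m_assoc ikc)
    then have "b = a \<otimes> (inv c \<otimes> d)" using d cu ab by (simp add: m_assoc)
    moreover have "inv c \<otimes> d \<in> carrier R" using cu d(1) by simp
    ultimately show False using ab(6) by blast
  qed
qed



context ring begin

lemma qm_carrier: "carrier (quot_module R I) = {I +> t | t. t \<in> carrier R}"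
  unfolding quot_module_def FactRing_def by (auto simp: A_RCOSETS_def')

lemma qm_zero: "\<zero>\<^bsub>quot_module R I\<^esub> = I"
  unfolding quot_module_def FactRing_def by simp

lemma qm_add: assumes "ideal I R" "t \<in> carrier R" "u \<in> carrier R"
  shows "(I +> t) \<oplus>\<^bsub>quot_module R I\<^esub> (I +> u) = I +> (t \<oplus> u)"
proof -
  interpret ideal I R by fact
  show ?thesis unfolding quot_module_def FactRing_def using assms by (simp add: a_rcos_sum)
qed

lemma qm_smult: assumes "ideal I R" "a \<in> carrier R" "t \<in> carrier R"
  shows "a \<odot>\<^bsub>quot_module R I\<^esub> (I +> t) = I +> (a \<otimes> t)"
proof -
  interpret ideal I R by fact
  show ?thesis unfolding quot_module_def FactRing_def using assms by (simp add: rcoset_mult_add)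
qed

lemma qm_eq0: assumes "ideal I R" "t \<in> carrier R"
  shows "(I +> t = I) \<longleftrightarrow> t \<in> I"
proof -
  interpret ideal I R by fact
  show ?thesis using assms a_rcos_const rcos_const_imp_mem by blast
qed

end

lemma triv_ext_mult: "(a, e) \<otimes>\<^bsub>triv_ext R M\<^esub> (a', e') = (a \<otimes>\<^bsub>R\<^esub> a', (a \<odot>\<^bsub>M\<^esub> e') \<oplus>\<^bsub>M\<^esub> (a' \<odot>\<^bsub>M\<^esub> e))"
  unfolding triv_ext_def by simp
lemma triv_ext_add: "(a, e) \<oplus>\<^bsub>triv_ext R M\<^esub> (a', e') = (a \<oplus>\<^bsub>R\<^esub> a', e \<oplus>\<^bsub>M\<^esub> e')"
  unfolding triv_ext_def by simp
lemma triv_ext_simps: "carrier (triv_ext R M) = carrier R \<times> carrier M"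
  "\<one>\<^bsub>triv_ext R M\<^esub> = (\<one>\<^bsub>R\<^esub>, \<zero>\<^bsub>M\<^esub>)" "\<zero>\<^bsub>triv_ext R M\<^esub> = (\<zero>\<^bsub>R\<^esub>, \<zero>\<^bsub>M\<^esub>)"
  unfolding triv_ext_def by simp_all
lemma amalg_mult: "(a, b) \<otimes>\<^bsub>amalg R S f J\<^esub> (a', b') = (a \<otimes>\<^bsub>R\<^esub> a', b \<otimes>\<^bsub>S\<^esub> b')"
  unfolding amalg_def by simp
lemma amalg_simps: "carrier (amalg R S f J) = {(a, f a \<oplus>\<^bsub>S\<^esub> j) | a j. a \<in> carrier R \<and> j \<in> J}"
  "\<one>\<^bsub>amalg R S f J\<^esub> = (\<one>\<^bsub>R\<^esub>, \<one>\<^bsub>S\<^esub>)" "\<zero>\<^bsub>amalg R S f J\<^esub> = (\<zero>\<^bsub>R\<^esub>, \<zero>\<^bsub>S\<^esub>)"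
  unfolding amalg_def by simp_all

lemma monoid_finprod_single:
  assumes G: "monoid G" and fa: "f a \<in> carrier G"
  shows "finprod G f {a} = f a"
proof -
  interpret monoid G by fact
  have "finprod G f {a} = foldD (carrier G) ((\<otimes>\<^bsub>G\<^esub>) \<circ> f) \<one>\<^bsub>G\<^esub> (insert a {})"
    by (simp add: finprod_def)
  also have "\<dots> = ((\<otimes>\<^bsub>G\<^esub>) \<circ> f) a (foldD (carrier G) ((\<otimes>\<^bsub>G\<^esub>) \<circ> f) \<one>\<^bsub>G\<^esub> {})"
    by (rule LCD.foldD_insert [OF LCD.intro [of "{a}"]]) (use fa in auto)
  also have "\<dots> = f a" using fa by simp
  finally show ?thesis .
qed

lemma (in domain) part12:
  assumes loc: "local_ring R m" and nv: "\<not> valuation_domain R"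
  shows "(\<not> {\<zero>} \<times> carrier (quot_module R m) \<subseteq> (\<lambda>a. (a, \<zero>\<^bsub>quot_module R m\<^esub>)) ` carrier R)
       \<and> (\<lambda>a. (a, \<zero>\<^bsub>quot_module R m\<^esub>)) ` Reg R \<noteq> Reg (triv_ext R (quot_module R m))"
proof -
  interpret M: maximalideal m R using loc local_ring_def by auto
  have mid: "ideal m R" by (rule M.is_ideal)
  have one_m: "\<one> \<notin> m" using M.one_imp_carrier M.I_notcarr by auto
  have unit: "\<And>x. x\<in>carrier R \<Longrightarrow> x \<notin> m \<Longrightarrow> x \<in> Units R" using local_unit[OF loc] by auto
  define E where "E = quot_module R m"
  define e1 where "e1 = m +> \<one>"
  have e1c: "e1 \<in> carrier E" unfolding E_def e1_def qm_carrier by blast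
  have e1z: "e1 \<noteq> m" unfolding e1_def using qm_eq0[OF mid] one_m by simp
  have z: "\<zero>\<^bsub>E\<^esub> = m" unfolding E_def qm_zero ..
  have m0: "m +> \<zero> = m" using qm_eq0[OF mid] M.zero_closed by simp
  have P1: "\<not> {\<zero>} \<times> carrier E \<subseteq> (\<lambda>a. (a, \<zero>\<^bsub>E\<^esub>)) ` carrier R"
    using e1c e1z z by auto
  from nv obtain a b where ab: "a \<in> carrier R" "b \<in> carrier R" "a \<noteq> \<zero>" "b \<noteq> \<zero>"
     "\<not>(\<exists>c\<in>carrier R. a = b \<otimes> c)" "\<not>(\<exists>c\<in>carrier R. b = a \<otimes> c)"
    unfolding valuation_domain_def using domain_axioms by blast
  have am: "a \<in> m"
  proof (rule ccontr)
    assume "a \<notin> m"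
    then have au: "a \<in> Units R" using unit ab by auto
    then have "b = a \<otimes> (inv a \<otimes> b)" using ab by (simp add: m_assoc[symmetric])
    moreover have "inv a \<otimes> b \<in> carrier R" using au ab by simp
    ultimately show False using ab(6) by blast
  qed
  have aReg: "a \<in> Reg R" unfolding Reg_def using ab integral by auto
  have "(a, \<zero>\<^bsub>E\<^esub>) \<notin> Reg (triv_ext R E)"
  proof
    assume "(a, \<zero>\<^bsub>E\<^esub>) \<in> Reg (triv_ext R E)"
    then have H: "\<And>y. y \<in> carrier (triv_ext R E) \<Longrightarrow> (a, \<zero>\<^bsub>E\<^esub>) \<otimes>\<^bsub>triv_ext R E\<^esub> y = \<zero>\<^bsub>triv_ext R E\<^esub> \<Longrightarrow> y = \<zero>\<^bsub>triv_ext R E\<^esub>"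
      unfolding Reg_def by blast
    have yc: "(\<zero>, e1) \<in> carrier (triv_ext R E)" using e1c triv_ext_simps by auto
    have "a \<odot>\<^bsub>E\<^esub> e1 = m +> (a \<otimes> \<one>)" unfolding E_def e1_def using qm_smult[OF mid] ab by simp
    also have "\<dots> = m" using qm_eq0[OF mid] am ab by simp
    finally have s1: "a \<odot>\<^bsub>E\<^esub> e1 = m" .
    have "\<zero> \<odot>\<^bsub>E\<^esub> m = m +> (\<zero> \<otimes> \<zero>)" unfolding E_def using qm_smult[OF mid, of \<zero> \<zero>] m0 by simp
    then have s2: "\<zero> \<odot>\<^bsub>E\<^esub> m = m" using m0 by simp
    have s3: "m \<oplus>\<^bsub>E\<^esub> m = m" unfolding E_def using qm_add[OF mid, of \<zero> \<zero>] m0 by simp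
    have "(a, \<zero>\<^bsub>E\<^esub>) \<otimes>\<^bsub>triv_ext R E\<^esub> (\<zero>, e1) = \<zero>\<^bsub>triv_ext R E\<^esub>"
      unfolding triv_ext_mult triv_ext_simps z using s1 s2 s3 ab by simp
    then have "(\<zero>, e1) = \<zero>\<^bsub>triv_ext R E\<^esub>" using H yc by blast
    then show False using e1z z by (simp add: triv_ext_simps)
  qed
  then have "(\<lambda>a. (a, \<zero>\<^bsub>E\<^esub>)) ` Reg R \<noteq> Reg (triv_ext R E)" using aReg by blast
  with P1 show ?thesis unfolding E_def by blast
qed

lemma (in domain) part4:
  assumes loc: "local_ring R m"
  shows "prufer (amalg R (triv_ext R (quot_module R m)) (\<lambda>a. (a, \<zero>\<^bsub>quot_module R m\<^esub>))
            ({\<zero>} \<times> carrier (quot_module R m)))"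
proof -
  interpret M: maximalideal m R using loc local_ring_def by auto
  have mid: "ideal m R" by (rule M.is_ideal)
  have one_m: "\<one> \<notin> m" using M.one_imp_carrier M.I_notcarr by auto
  have unit: "\<And>x. x\<in>carrier R \<Longrightarrow> x \<notin> m \<Longrightarrow> x \<in> Units R" using local_unit[OF loc] by auto
  define E where "E = quot_module R m"
  define B where "B = triv_ext R E"
  define C where "C = amalg R B (\<lambda>a. (a, \<zero>\<^bsub>E\<^esub>)) ({\<zero>} \<times> carrier E)"
  have z: "\<zero>\<^bsub>E\<^esub> = m" unfolding E_def qm_zero ..
  have m0: "m +> \<zero> = m" using qm_eq0[OF mid] M.zero_closed by simp
  have Ec: "carrier E = {m +> t | t. t \<in> carrier R}" unfolding E_def qm_carrier ..
  have Eadd: "\<And>t u. t \<in> carrier R \<Longrightarrow> u \<in> carrier R \<Longrightarrow> (m +> t) \<oplus>\<^bsub>E\<^esub> (m +> u) = m +> (t \<oplus> u)"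
    unfolding E_def using qm_add[OF mid] by simp
  have Esm: "\<And>a t. a \<in> carrier R \<Longrightarrow> t \<in> carrier R \<Longrightarrow> a \<odot>\<^bsub>E\<^esub> (m +> t) = m +> (a \<otimes> t)"
    unfolding E_def using qm_smult[OF mid] by simp
  have Cc1: "\<exists>a t. a \<in> carrier R \<and> t \<in> carrier R \<and> x = (a, (a, m +> t))" if "x \<in> carrier C" for x
  proof -
    have "x \<in> {(a, (a, \<zero>\<^bsub>E\<^esub>) \<oplus>\<^bsub>B\<^esub> j) | a j. a \<in> carrier R \<and> j \<in> {\<zero>} \<times> carrier E}"
      using that unfolding C_def amalg_simps .
    then obtain a j where aj: "a \<in> carrier R" "j \<in> {\<zero>} \<times> carrier E" "x = (a, (a, \<zero>\<^bsub>E\<^esub>) \<oplus>\<^bsub>B\<^esub> j)"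
      by blast
    then obtain e where "j = (\<zero>, e)" "e \<in> carrier E" by blast
    then have ae: "a \<in> carrier R" "e \<in> carrier E" "x = (a, (a, \<zero>\<^bsub>E\<^esub>) \<oplus>\<^bsub>B\<^esub> (\<zero>, e))"
      using aj by simp_all
    obtain t where t: "t \<in> carrier R" "e = m +> t" using ae(2) Ec by blast
    have "(a, \<zero>\<^bsub>E\<^esub>) \<oplus>\<^bsub>B\<^esub> (\<zero>, e) = (a \<oplus> \<zero>, (m +> \<zero>) \<oplus>\<^bsub>E\<^esub> (m +> t))"
      unfolding B_def triv_ext_add z m0 t(2) ..
    also have "\<dots> = (a, m +> t)" using Eadd t ae by simp
    finally have "x = (a, (a, m +> t))" using ae(3) by simp
    then show ?thesis using ae(1) t(1) by blast
  qed
  have Cc2: "(a, (a, m +> t)) \<in> carrier C" if "a \<in> carrier R" "t \<in> carrier R" for a t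
  proof -
    have "(a, \<zero>\<^bsub>E\<^esub>) \<oplus>\<^bsub>B\<^esub> (\<zero>, m +> t) = (a \<oplus> \<zero>, (m +> \<zero>) \<oplus>\<^bsub>E\<^esub> (m +> t))"
      unfolding B_def triv_ext_add z m0 ..
    also have "\<dots> = (a, m +> t)" using Eadd that by simp
    finally have "(a, (a, m +> t)) = (a, (a, \<zero>\<^bsub>E\<^esub>) \<oplus>\<^bsub>B\<^esub> (\<zero>, m +> t))" by simp
    moreover have "m +> t \<in> carrier E" using Ec that by blast
    ultimately show ?thesis unfolding C_def amalg_simps using that by blast
  qed
  have Cm: "(a, (a, m +> t)) \<otimes>\<^bsub>C\<^esub> (b, (b, m +> u)) = (a \<otimes> b, (a \<otimes> b, m +> (a \<otimes> u \<oplus> b \<otimes> t)))"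
    if "a \<in> carrier R" "t \<in> carrier R" "b \<in> carrier R" "u \<in> carrier R" for a t b u
    unfolding C_def amalg_mult B_def triv_ext_mult using Esm Eadd that by simp
  have C1: "\<one>\<^bsub>C\<^esub> = (\<one>, (\<one>, m))" unfolding C_def B_def amalg_simps triv_ext_simps z ..
  have C0: "\<zero>\<^bsub>C\<^esub> = (\<zero>, (\<zero>, m))" unfolding C_def B_def amalg_simps triv_ext_simps z ..
  have key: "\<one>\<^bsub>C\<^esub> \<in> I" if I: "ideal I C" and x: "x \<in> I" "x \<in> Reg C" for I x
  proof -
    interpret I: ideal I C by fact
    have xR: "\<And>y. y \<in> carrier C \<Longrightarrow> x \<otimes>\<^bsub>C\<^esub> y = \<zero>\<^bsub>C\<^esub> \<Longrightarrow> y = \<zero>\<^bsub>C\<^esub>"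
      using x(2) unfolding Reg_def by blast
    have xc: "x \<in> carrier C" using x(2) unfolding Reg_def by simp
    obtain a t where at: "a \<in> carrier R" "t \<in> carrier R" "x = (a, (a, m +> t))"
      using Cc1[OF xc] by blast
    have am: "a \<notin> m"
    proof
      assume am: "a \<in> m"
      have yc: "(\<zero>, (\<zero>, m +> \<one>)) \<in> carrier C" using Cc2 by simp
      have "x \<otimes>\<^bsub>C\<^esub> (\<zero>, (\<zero>, m +> \<one>)) = (\<zero>, (\<zero>, m +> a))"
        using Cm at by simp
      also have "\<dots> = \<zero>\<^bsub>C\<^esub>" using C0 qm_eq0[OF mid] am at by simp
      finally have "(\<zero>, (\<zero>, m +> \<one>)) = \<zero>\<^bsub>C\<^esub>" using xR yc by blast
      then have "m +> \<one> = m" using C0 by simp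
      then show False using qm_eq0[OF mid] one_m by simp
    qed
    then have au: "a \<in> Units R" using unit at by simp
    define a' where "a' = inv a"
    have a': "a' \<in> carrier R" "a \<otimes> a' = \<one>" "a' \<otimes> a = \<one>" using au unfolding a'_def by simp_all
    define w where "w = \<ominus> (a' \<otimes> a' \<otimes> t)"
    have wc: "w \<in> carrier R" unfolding w_def using a' at by simp
    have yc: "(a', (a', m +> w)) \<in> carrier C" using Cc2 a' wc by simp
    have "a \<otimes> w \<oplus> a' \<otimes> t = \<zero>"
    proof -
      have e1: "a \<otimes> w = \<ominus> (a \<otimes> (a' \<otimes> a' \<otimes> t))" unfolding w_def using a' at
        by (simp add: r_minus)
      have e2: "a \<otimes> (a' \<otimes> a' \<otimes> t) = (a \<otimes> a') \<otimes> (a' \<otimes> t)" using a'(1) at(1,2)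
        by (simp add: m_assoc)
      have e3: "(a \<otimes> a') \<otimes> (a' \<otimes> t) = a' \<otimes> t" unfolding a'(2) using a'(1) at(2) by simp
      have "a \<otimes> w = \<ominus> (a' \<otimes> t)" using e1 e2 e3 by simp
      then show ?thesis using a' at by (simp add: l_neg)
    qed
    then have "x \<otimes>\<^bsub>C\<^esub> (a', (a', m +> w)) = \<one>\<^bsub>C\<^esub>"
      using Cm[OF at(1,2) a'(1) wc] at a' C1 m0 by simp
    moreover have "x \<otimes>\<^bsub>C\<^esub> (a', (a', m +> w)) \<in> I" using I.I_r_closed x(1) yc by blast
    ultimately show ?thesis by simp
  qed
  show ?thesis unfolding prufer_def E_def[symmetric] B_def[symmetric] C_def[symmetric]
  proof (intro allI impI)
    fix I assume "fin_gen_ideal C I \<and> regular_ideal C I"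
    then have Iid: "ideal I C" and "I \<inter> Reg C \<noteq> {}" unfolding regular_ideal_def by auto
    then obtain x where "x \<in> I" "x \<in> Reg C" by blast
    then have oneI: "\<one>\<^bsub>C\<^esub> \<in> I" using key Iid by blast
    interpret I: ideal I C by fact
    have onereg: "\<one>\<^bsub>C\<^esub> \<in> Reg C" unfolding Reg_def by simp
    have inv: "in_inverse C I \<one>\<^bsub>C\<^esub> \<one>\<^bsub>C\<^esub>" unfolding in_inverse_def
      using onereg I.Icarr by auto
    have "(\<Oplus>\<^bsub>C\<^esub> k\<in>{..<1::nat}. \<one>\<^bsub>C\<^esub> \<otimes>\<^bsub>C\<^esub> \<one>\<^bsub>C\<^esub> \<otimes>\<^bsub>C\<^esub> (\<Otimes>\<^bsub>C\<^esub> j\<in>{..<1} - {k}. \<one>\<^bsub>C\<^esub>))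
          = (\<Otimes>\<^bsub>C\<^esub> j\<in>{..<1::nat}. \<one>\<^bsub>C\<^esub>)"
    proof -
      have mC: "monoid C" using I.is_monoid .
      have e: "(\<Otimes>\<^bsub>C\<^esub> j\<in>{}. \<one>\<^bsub>C\<^esub>) = \<one>\<^bsub>C\<^esub>" by (simp add: finprod_def)
      have s1: "(\<Otimes>\<^bsub>C\<^esub> j\<in>{0::nat}. \<one>\<^bsub>C\<^esub>) = \<one>\<^bsub>C\<^esub>" using monoid_finprod_single[OF mC, of "\<lambda>_. \<one>\<^bsub>C\<^esub>"] by simp
      have s2: "(\<Oplus>\<^bsub>C\<^esub> k\<in>{0::nat}. \<one>\<^bsub>C\<^esub> \<otimes>\<^bsub>C\<^esub> \<one>\<^bsub>C\<^esub> \<otimes>\<^bsub>C\<^esub> (\<Otimes>\<^bsub>C\<^esub> j\<in>{0} - {k}. \<one>\<^bsub>C\<^esub>))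
          = \<one>\<^bsub>C\<^esub>"
        using I.finsum_insert[of "{}" 0 "\<lambda>k. \<one>\<^bsub>C\<^esub> \<otimes>\<^bsub>C\<^esub> \<one>\<^bsub>C\<^esub> \<otimes>\<^bsub>C\<^esub> (\<Otimes>\<^bsub>C\<^esub> j\<in>{0} - {k}. \<one>\<^bsub>C\<^esub>)"] by (simp add: e)
      show ?thesis using s1 s2 e by (simp add: lessThan_Suc)
    qed
    then show "invertible_ideal C I" unfolding invertible_ideal_def using Iid inv oneI
      by (intro conjI exI[of _ "1::nat"] exI[of _ "\<lambda>_. \<one>\<^bsub>C\<^esub>"]) auto
  qed
qed


theorem mainTheorem7:
  fixes A :: "('a, 'c) ring_scheme" and m :: "'a set"
  assumes "domain A" and "local_ring A m" and "\<not> valuation_domain A"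
  defines "B \<equiv> triv_ext A (quot_module A m)"
      and "f \<equiv> (\<lambda>a. (a, \<zero>\<^bsub>quot_module A m\<^esub>))"
      and "J \<equiv> {\<zero>\<^bsub>A\<^esub>} \<times> carrier (quot_module A m)"
  shows "(\<not> J \<subseteq> f ` carrier A) \<and> f ` Reg A \<noteq> Reg B \<and> \<not> prufer A \<and> prufer (amalg A B f J)"
  using domain.part12[OF assms(1-3)] domain.not_prufer[OF assms(1-3)] domain.part4[OF assms(1,2)]
  unfolding B_def f_def J_def by blast

end
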